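(* In the setting of the context, let $$SA(M)=-\frac12\sum_{i=1}^{2n}[M_i,M_{i+1}],\qquad SA(N)=-\frac12\sum_{i=1}^{2n}[N_{i-\frac12},N_{i+\frac12}]$$ be the signed areas of $M$ and $N$. Then $$SA(M)-SA(N)=\sum_{i=1}^{n}\beta_i^2\,[V_{i-\frac12},V_{i+\frac12}].$$
   Context: $[x,y]$ denotes the determinant of the matrix with columns $x,y\in\mathbb{R}^2$. Fix $n\ge2$; indices (integer and half-integer) are read modulo $2n$. $U$ is a convex $2n$-gon with distinct vertices $U_1,\dots,U_{2n}$ in counterclockwise order with $U_{i+n}=-U_i$, and $V_{i+\frac12}=(U_{i+1}-U_i)/[U_i,U_{i+1}]$. Let $c>0$ and let $P$ be a convex polygon with nonempty interior and vertex list $P_1,\dots,P_{2n}$ (consecutive entries may coincide) with $P_{i+1}-P_i$ a nonnegative multiple of $V_{i+\frac12}$ and $P_i-P_{i+n}=2cU_i$ for all $i$. The central equidistant $M$ has vertices $M_i=\frac12(P_i+P_{i+n})$; define $\alpha_{i+\frac12}$ by $M_{i+1}-M_i=\alpha_{i+\frac12}(U_{i+1}-U_i)$ and $\beta_i=\frac12\sum_{j=i}^{i+n-1}\alpha_{j+\frac12}[U_j,U_{j+1}]$. The involute $N$ of $M$ is the polygon with vertices $N_{i+\frac12}=M_i+\beta_iV_{i+\frac12}$, $1\le i\le 2n$. *)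

theory Defs
  imports "HOL-Analysis.Analysis"
begin

text \<open>Points of the plane are pairs of reals. Integer index i stands for vertex i,
  and for half-integer vertices we use: index i stands for i + 1/2.\<close>

definition det2 :: "real \<times> real \<Rightarrow> real \<times> real \<Rightarrow> real" where
  "det2 x y = fst x * snd y - snd x * fst y"

definition convex_ccw_polygon :: "nat \<Rightarrow> (int \<Rightarrow> real \<times> real) \<Rightarrow> bool" where
  "convex_ccw_polygon m p \<longleftrightarrow>
     (\<forall>i. p (i + int m) = p i) \<and> inj_on p {1..int m} \<and>
     (\<forall>i j. j mod int m \<noteq> i mod int m \<longrightarrow> j mod int m \<noteq> (i + 1) mod int m \<longrightarrow>
        det2 (p (i + 1) - p i) (p j - p i) > 0)"

text \<open>V U i represents V_{i+1/2}.\<close>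
definition Vdir :: "(int \<Rightarrow> real \<times> real) \<Rightarrow> int \<Rightarrow> real \<times> real" where
  "Vdir U i = (1 / det2 (U i) (U (i + 1))) *\<^sub>R (U (i + 1) - U i)"

definition Mvert :: "nat \<Rightarrow> (int \<Rightarrow> real \<times> real) \<Rightarrow> int \<Rightarrow> real \<times> real" where
  "Mvert n P i = (1 / 2) *\<^sub>R (P i + P (i + int n))"

text \<open>alpha i represents alpha_{i+1/2}.\<close>
definition beta :: "nat \<Rightarrow> (int \<Rightarrow> real \<times> real) \<Rightarrow> (int \<Rightarrow> real) \<Rightarrow> int \<Rightarrow> real" where
  "beta n U alpha i = (1 / 2) * (\<Sum>j\<in>{i..i + int n - 1}. alpha j * det2 (U j) (U (j + 1)))"

text \<open>Involute vertices: Nvert n U P alpha i represents N_{i+1/2}.\<close>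
definition Nvert :: "nat \<Rightarrow> (int \<Rightarrow> real \<times> real) \<Rightarrow> (int \<Rightarrow> real \<times> real) \<Rightarrow> (int \<Rightarrow> real) \<Rightarrow> int \<Rightarrow> real \<times> real" where
  "Nvert n U P alpha i = Mvert n P i + beta n U alpha i *\<^sub>R Vdir U i"

end

theory Submission
  imports Defs
begin

lemma sum_shift_int: "(\<Sum>j\<in>{a+k..b+k}. f j) = (\<Sum>j\<in>{a..b::int}. f (j + k))"
  by (rule sum.reindex_bij_witness[where i="\<lambda>j. j + k" and j="\<lambda>j. j - k"]) auto

lemma telescope_int: "(\<Sum>i\<in>{1..int k}. g (i - 1) - g i) = g 0 - (g (int k) :: real)"
proof (induction k)
  case 0 then show ?case by simp
next
  case (Suc k)
  have "{1..int (Suc k)} = insert (1 + int k) {1..int k}" by auto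
  then show ?case using Suc by simp
qed

lemma sum_double_int:
  assumes "\<And>i. h (i + int n) = (h i :: real)"
  shows "(\<Sum>i\<in>{1..2 * int n}. h i) = 2 * (\<Sum>i\<in>{1..int n}. h i)"
proof -
  have "{1..2 * int n} = {1..int n} \<union> {1 + int n..int n + int n}" by auto
  moreover have "{1..int n} \<inter> {1 + int n..int n + int n} = {}" by auto
  ultimately have "(\<Sum>i\<in>{1..2 * int n}. h i) = (\<Sum>i\<in>{1..int n}. h i) + (\<Sum>i\<in>{1 + int n..int n + int n}. h i)"
    by (simp add: sum.union_disjoint)
  also have "(\<Sum>i\<in>{1 + int n..int n + int n}. h i) = (\<Sum>i\<in>{1..int n}. h i)"
    using sum_shift_int[where a=1 and k="int n" and b="int n" and f=h] assms by simp
  finally show ?thesis by simp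
qed

lemma mod_ne: assumes "0 < k" "k < (m::int)" shows "(i + k) mod m \<noteq> i mod m"
proof
  assume "(i + k) mod m = i mod m"
  then have "m dvd k" by (simp add: mod_eq_dvd_iff)
  then show False using assms zdvd_imp_le by fastforce
qed

theorem proposition4p2:
  fixes n :: nat and U P :: "int \<Rightarrow> real \<times> real" and c :: real and alpha :: "int \<Rightarrow> real"
  assumes n2: "n \<ge> 2"
    and Upoly: "convex_ccw_polygon (2 * n) U"
    and Usym: "\<forall>i. U (i + int n) = - U i"
    and c_pos: "c > 0"
    and Pper: "\<forall>i. P (i + 2 * int n) = P i"
    and Pint: "interior (convex hull (P ` {1..2 * int n})) \<noteq> {}"
    and Pedge: "\<forall>i. \<exists>t\<ge>0. P (i + 1) - P i = t *\<^sub>R Vdir U i"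
    and Pwidth: "\<forall>i. P i - P (i + int n) = (2 * c) *\<^sub>R U i"
    and alpha: "\<forall>i. Mvert n P (i + 1) - Mvert n P i = alpha i *\<^sub>R (U (i + 1) - U i)"
  shows "(- (1 / 2) * (\<Sum>i\<in>{1..2 * int n}. det2 (Mvert n P i) (Mvert n P (i + 1))))
         - (- (1 / 2) * (\<Sum>i\<in>{1..2 * int n}. det2 (Nvert n U P alpha (i - 1)) (Nvert n U P alpha i)))
         = (\<Sum>i\<in>{1..int n}. (beta n U alpha i)\<^sup>2 * det2 (Vdir U (i - 1)) (Vdir U i))"
proof -
  define m where "m = Mvert n P"
  define b where "b = Vdir U"
  define B where "B = beta n U alpha"
  define d where "d = (\<lambda>i. det2 (U i) (U (i + 1)))"
  have Un: "U (i + int n) = - U i" for i using Usym by blast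
  have Un1: "U (i + int n + 1) = - U (i + 1)" for i using Un[of "i+1"] by (simp add: ac_simps)
  have d_pos: "d i > 0" for i
  proof -
    have "(i + int n) mod int (2*n) \<noteq> i mod int (2*n)"
      using mod_ne[of "int n" "int (2*n)" i] n2 by simp
    moreover have "(i + int n) mod int (2*n) \<noteq> (i + 1) mod int (2*n)"
      using mod_ne[of "int n - 1" "int (2*n)" "i+1"] n2 by (simp add: ac_simps)
    ultimately have "det2 (U (i + 1) - U i) (U (i + int n) - U i) > 0"
      using Upoly unfolding convex_ccw_polygon_def by blast
    then show ?thesis unfolding d_def using Un[of i]
      by (simp add: det2_def algebra_simps)
  qed
  have dn: "d (i + int n) = d i" for i
    unfolding d_def using Un[of i] Un1[of i] by (simp add: det2_def)
  have bn: "b (i + int n) = - b i" for i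
    unfolding b_def Vdir_def using Un[of i] Un1[of i] by (simp add: det2_def algebra_simps)
  have mn: "m (i + int n) = m i" for i
    unfolding m_def Mvert_def using Pper by (simp add: ac_simps mult_2)
  have alphan: "alpha (i + int n) = - alpha i" for i
  proof -
    have "alpha (i + int n) *\<^sub>R (U (i + int n + 1) - U (i + int n)) = alpha i *\<^sub>R (U (i + 1) - U i)"
      using alpha mn[of i] mn[of "i+1"] unfolding m_def by (metis add.commute add.left_commute)
    then have "(alpha (i + int n) + alpha i) *\<^sub>R (U (i + 1) - U i) = 0"
      using Un[of i] Un1[of i] by (simp add: algebra_simps)
    moreover have "U (i + 1) - U i \<noteq> 0" using d_pos[of i] unfolding d_def
      by (auto simp: det2_def)
    ultimately show ?thesis by simp
  qed
  have Bstep: "B (i + 1) = B i - alpha i * d i" for i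
  proof -
    let ?f = "\<lambda>j. alpha j * det2 (U j) (U (j + 1))"
    have s1: "{i..i + int n - 1} = insert i {i+1..i + int n - 1}" using n2 by auto
    have s2: "{i+1..i + 1 + int n - 1} = insert (i + int n) {i+1..i + int n - 1}" using n2 by auto
    have "?f (i + int n) = - alpha i * d i" using alphan[of i] dn[of i] unfolding d_def by simp
    then show ?thesis unfolding B_def beta_def s1 s2 d_def by (simp add: algebra_simps)
  qed
  have Bn: "B (i + int n) = - B i" for i
  proof -
    have "B (i + int n) = 1/2 * (\<Sum>j\<in>{i..i + int n - 1}. alpha (j + int n) * det2 (U (j + int n)) (U (j + int n + 1)))"
    proof -
      have e: "{i + int n..i + int n + int n - 1} = {i + int n..i + int n - 1 + int n}" by (simp add: algebra_simps)
      show ?thesis unfolding B_def beta_def e sum_shift_int by (simp add: ac_simps)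
    qed
    also have "\<dots> = - B i" unfolding B_def beta_def using alphan dn unfolding d_def
      by (simp add: sum_negf)
    finally show ?thesis .
  qed
  have Bper: "B (i + 2 * int n) = B i" for i using Bn[of i] Bn[of "i + int n"] by (simp add: ac_simps mult_2)
  have bper: "b (i + 2 * int n) = b i" for i using bn[of i] bn[of "i + int n"] by (simp add: ac_simps mult_2)
  have mper: "m (i + 2 * int n) = m i" for i using mn[of i] mn[of "i + int n"] by (simp add: ac_simps mult_2)
  have mstep: "m (i + 1) = m i + (B i - B (i + 1)) *\<^sub>R b i" for i
  proof -
    have "m (i + 1) - m i = (alpha i * d i) *\<^sub>R b i"
      using alpha d_pos[of i] unfolding m_def b_def Vdir_def d_def by simp
    moreover have "B i - B (i + 1) = alpha i * d i" using Bstep[of i] by simp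
    ultimately show ?thesis by (metis add_diff_cancel_left' diff_add_cancel)
  qed
  have N1: "Nvert n U P alpha i = m i + B i *\<^sub>R b i" for i
    unfolding Nvert_def m_def B_def b_def ..
  have N0: "Nvert n U P alpha (i - 1) = m i + B i *\<^sub>R b (i - 1)" for i
    using N1[of "i - 1"] mstep[of "i - 1"] by (simp add: algebra_simps)
  define g where "g = (\<lambda>i. B (i + 1) * det2 (m i) (b i))"
  have gm: "g (i - 1) = B i * det2 (m i) (b (i - 1))" for i
  proof -
    have "m (i - 1) = m i - (B (i - 1) - B i) *\<^sub>R b (i - 1)" using mstep[of "i - 1"] by simp
    then show ?thesis unfolding g_def diff_add_cancel by (simp only: ) (simp add: det2_def algebra_simps)
  qed
  have tm: "det2 (m i) (m (i + 1)) - det2 (Nvert n U P alpha (i - 1)) (Nvert n U P alpha i)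
     = (g (i - 1) - g i) - (B i)\<^sup>2 * det2 (b (i - 1)) (b i)" for i
  proof -
    note e = N0[of i] N1[of i] gm[of i] mstep[of i]
    have e2: "g i = B (i + 1) * det2 (m i) (b i)" unfolding g_def ..
    show ?thesis by (simp only: e e2) (simp add: det2_def algebra_simps power2_eq_square)
  qed
  have "(\<Sum>i\<in>{1..2 * int n}. det2 (m i) (m (i + 1)) - det2 (Nvert n U P alpha (i - 1)) (Nvert n U P alpha i))
      = (\<Sum>i\<in>{1..int (2 * n)}. g (i - 1) - g i) - (\<Sum>i\<in>{1..2 * int n}. (B i)\<^sup>2 * det2 (b (i - 1)) (b i))"
    unfolding tm by (simp add: sum_subtractf)
  also have "(\<Sum>i\<in>{1..int (2 * n)}. g (i - 1) - g i) = 0"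
    unfolding telescope_int using Bper[of 1] mper[of 0] bper[of 0] by (simp add: g_def add.commute)
  also have "(\<Sum>i\<in>{1..2 * int n}. (B i)\<^sup>2 * det2 (b (i - 1)) (b i)) = 2 * (\<Sum>i\<in>{1..int n}. (B i)\<^sup>2 * det2 (b (i - 1)) (b i))"
  proof (rule sum_double_int)
    fix i
    show "(B (i + int n))\<^sup>2 * det2 (b (i + int n - 1)) (b (i + int n)) = (B i)\<^sup>2 * det2 (b (i - 1)) (b i)"
      using Bn[of i] bn[of i] bn[of "i - 1"] by (simp add: det2_def algebra_simps)
  qed
  finally have key: "(\<Sum>i\<in>{1..2 * int n}. det2 (m i) (m (i + 1)) - det2 (Nvert n U P alpha (i - 1)) (Nvert n U P alpha i))
      = - 2 * (\<Sum>i\<in>{1..int n}. (B i)\<^sup>2 * det2 (b (i - 1)) (b i))" by simp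
  show ?thesis using key unfolding m_def[symmetric] B_def[symmetric] b_def[symmetric]
    by (simp add: sum_subtractf algebra_simps)
qed

end
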